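(* Let $d\ge1$, $L\ge3$, $r\ge1$ be integers, $n=L^d$. Let $\tau_1$ be the relaxation time of the ZRP with rate $1$ and $r$ particles on the torus $\mathbf{Z}^d/L\mathbf{Z}^d$, and let $\tau_2$ be the relaxation time of the ZRP with rate $1$ and $r$ particles on the complete graph $K_n$ (no self-loops). Then $\tau_1\le 2d^2L^2\,\tau_2$. *)

theory Defs
  imports Complex_Main
begin

text \<open>Zero-range process (ZRP) with constant rate 1 and r particles on a finite vertex set V,
  where particles move according to a transition kernel P (random-walk kernel of the graph):
  each occupied site x emits a particle at total rate 1, which moves to y with probability P x y.\<close>

definition zrp_configs :: "'v set \<Rightarrow> nat \<Rightarrow> ('v \<Rightarrow> nat) set" where
  "zrp_configs V r = {\<eta>. (\<forall>x. x \<notin> V \<longrightarrow> \<eta> x = 0) \<and> (\<Sum>x\<in>V. \<eta> x) = r}"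

definition zrp_move :: "('v \<Rightarrow> nat) \<Rightarrow> 'v \<Rightarrow> 'v \<Rightarrow> ('v \<Rightarrow> nat)" where
  "zrp_move \<eta> x y = (\<eta>(x := \<eta> x - 1)) (y := (\<eta>(x := \<eta> x - 1)) y + 1)"

text \<open>Stationary measure: uniform on configurations (rate-1 ZRP with symmetric kernel).\<close>

definition zrp_mean :: "'v set \<Rightarrow> nat \<Rightarrow> (('v \<Rightarrow> nat) \<Rightarrow> real) \<Rightarrow> real" where
  "zrp_mean V r f = (\<Sum>\<eta>\<in>zrp_configs V r. f \<eta>) / real (card (zrp_configs V r))"

definition zrp_var :: "'v set \<Rightarrow> nat \<Rightarrow> (('v \<Rightarrow> nat) \<Rightarrow> real) \<Rightarrow> real" where
  "zrp_var V r f = (\<Sum>\<eta>\<in>zrp_configs V r. (f \<eta> - zrp_mean V r f)^2) / real (card (zrp_configs V r))"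

text \<open>Dirichlet form E(f) = 1/2 sum_{eta,xi} pi(eta) q(eta,xi) (f xi - f eta)^2.\<close>

definition zrp_dirichlet :: "'v set \<Rightarrow> ('v \<Rightarrow> 'v \<Rightarrow> real) \<Rightarrow> nat \<Rightarrow> (('v \<Rightarrow> nat) \<Rightarrow> real) \<Rightarrow> real" where
  "zrp_dirichlet V P r f =
     (\<Sum>\<eta>\<in>zrp_configs V r. \<Sum>x\<in>V. \<Sum>y\<in>V.
        (if 0 < \<eta> x then P x y * (f (zrp_move \<eta> x y) - f \<eta>)^2 else 0))
     / (2 * real (card (zrp_configs V r)))"

text \<open>Spectral gap (variational characterisation for the reversible chain) and relaxation time.\<close>

definition zrp_gap :: "'v set \<Rightarrow> ('v \<Rightarrow> 'v \<Rightarrow> real) \<Rightarrow> nat \<Rightarrow> real" where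
  "zrp_gap V P r = Inf {zrp_dirichlet V P r f / zrp_var V r f | f. zrp_var V r f \<noteq> 0}"

definition zrp_relax :: "'v set \<Rightarrow> ('v \<Rightarrow> 'v \<Rightarrow> real) \<Rightarrow> nat \<Rightarrow> real" where
  "zrp_relax V P r = 1 / zrp_gap V P r"

definition torus_vertices :: "nat \<Rightarrow> nat \<Rightarrow> (nat \<Rightarrow> nat) set" where
  "torus_vertices d L = {x. (\<forall>i<d. x i < L) \<and> (\<forall>i. d \<le> i \<longrightarrow> x i = 0)}"

definition torus_adj :: "nat \<Rightarrow> nat \<Rightarrow> (nat \<Rightarrow> nat) \<Rightarrow> (nat \<Rightarrow> nat) \<Rightarrow> bool" where
  "torus_adj d L x y \<longleftrightarrow> (\<exists>i<d. (\<forall>j. j \<noteq> i \<longrightarrow> y j = x j) \<and>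
       (y i = (x i + 1) mod L \<or> x i = (y i + 1) mod L))"

text \<open>Simple random walk kernel on the torus (degree 2d when L >= 3).\<close>

definition torus_kernel :: "nat \<Rightarrow> nat \<Rightarrow> (nat \<Rightarrow> nat) \<Rightarrow> (nat \<Rightarrow> nat) \<Rightarrow> real" where
  "torus_kernel d L x y = (if torus_adj d L x y then 1 / (2 * real d) else 0)"

definition complete_kernel :: "nat \<Rightarrow> nat \<Rightarrow> nat \<Rightarrow> real" where
  "complete_kernel n x y = (if x \<noteq> y then 1 / (real n - 1) else 0)"

end

theory Submission
  imports Defs "HOL-Analysis.Analysis"
begin

lemma zrp_configs_finite:
  assumes "finite V" shows "finite (zrp_configs V r)"
proof -
  have "zrp_configs V r \<subseteq> (\<lambda>g x. if x \<in> V then g x else 0) ` (PiE V (\<lambda>_. {0..r}))"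
  proof
    fix \<eta> assume h: "\<eta> \<in> zrp_configs V r"
    have le: "\<eta> x \<le> r" if "x \<in> V" for x
    proof -
      have "\<eta> x \<le> (\<Sum>z\<in>V. \<eta> z)" using that assms by (intro member_le_sum) auto
      then show ?thesis using h unfolding zrp_configs_def by simp
    qed
    have "\<eta> = (\<lambda>x. if x \<in> V then restrict \<eta> V x else 0)"
      using h unfolding zrp_configs_def by (auto simp: fun_eq_iff)
    moreover have "restrict \<eta> V \<in> PiE V (\<lambda>_. {0..r})" using le by auto
    ultimately show "\<eta> \<in> (\<lambda>g x. if x \<in> V then g x else 0) ` (PiE V (\<lambda>_. {0..r}))"
      by blast
  qed
  moreover have "finite (PiE V (\<lambda>_. {0..r}))" using assms by (simp add: finite_PiE)
  ultimately show ?thesis by (meson finite_surj)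
qed

lemma zrp_move_in:
  assumes "\<eta> \<in> zrp_configs V r" "x \<in> V" "y \<in> V" "0 < \<eta> x" "finite V"
  shows "zrp_move \<eta> x y \<in> zrp_configs V r"
proof (cases "x = y")
  case True
  then have "zrp_move \<eta> x y = \<eta>" using assms(4) by (auto simp: zrp_move_def fun_eq_iff)
  then show ?thesis using assms by simp
next
  case False
  let ?e = "\<eta>(x := \<eta> x - 1)"
  have s1: "(\<Sum>z\<in>V. ?e z) = (\<Sum>z\<in>V. \<eta> z) - 1"
  proof -
    have "(\<Sum>z\<in>V. \<eta> z) = \<eta> x + (\<Sum>z\<in>V-{x}. \<eta> z)" using assms by (intro sum.remove) auto
    moreover have "(\<Sum>z\<in>V. ?e z) = ?e x + (\<Sum>z\<in>V-{x}. ?e z)" using assms by (intro sum.remove) auto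
    moreover have "(\<Sum>z\<in>V-{x}. ?e z) = (\<Sum>z\<in>V-{x}. \<eta> z)" by (rule sum.cong) auto
    ultimately show ?thesis using assms(4) by simp
  qed
  have s2: "(\<Sum>z\<in>V. (?e(y := ?e y + 1)) z) = (\<Sum>z\<in>V. ?e z) + 1"
  proof -
    have "(\<Sum>z\<in>V. (?e(y := ?e y + 1)) z) = (?e(y := ?e y + 1)) y + (\<Sum>z\<in>V-{y}. (?e(y := ?e y + 1)) z)" using assms by (intro sum.remove) auto
    moreover have "(\<Sum>z\<in>V. ?e z) = ?e y + (\<Sum>z\<in>V-{y}. ?e z)" using assms by (intro sum.remove) auto
    moreover have "(\<Sum>z\<in>V-{y}. (?e(y := ?e y + 1)) z) = (\<Sum>z\<in>V-{y}. ?e z)" by (rule sum.cong) auto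
    ultimately show ?thesis by simp
  qed
  have "(\<Sum>z\<in>V. \<eta> z) \<ge> 1" using assms(4) assms(2) assms(5)
    by (metis One_nat_def Suc_leI le_trans member_le_sum zero_le)
  moreover have "\<forall>z. z \<notin> V \<longrightarrow> zrp_move \<eta> x y z = 0"
    using assms unfolding zrp_configs_def zrp_move_def by auto
  moreover have "(\<Sum>z\<in>V. zrp_move \<eta> x y z) = (\<Sum>z\<in>V. \<eta> z)"
    unfolding zrp_move_def using s1 s2 calculation(1) by simp
  ultimately show ?thesis using assms unfolding zrp_configs_def by simp
qed

lemma zrp_move_self: "0 < \<eta> x \<Longrightarrow> zrp_move \<eta> x x = \<eta>"
  by (auto simp: zrp_move_def fun_eq_iff)

lemma zrp_move_move: "0 < \<eta> x \<Longrightarrow> zrp_move (zrp_move \<eta> x z) z w = zrp_move \<eta> x w"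
  unfolding zrp_move_def fun_eq_iff by simp

lemma zrp_move_pos: "0 < zrp_move \<eta> x z z"
  by (auto simp: zrp_move_def)

lemma zrp_move_back: "0 < \<eta> x \<Longrightarrow> zrp_move (zrp_move \<eta> x z) z x = \<eta>"
  by (simp add: zrp_move_move zrp_move_self)

lemma zrp_var_nonneg: "zrp_var V r f \<ge> 0"
  unfolding zrp_var_def by (intro divide_nonneg_nonneg sum_nonneg) auto

lemma zrp_dirichlet_nonneg:
  assumes "\<And>x y. x \<in> V \<Longrightarrow> y \<in> V \<Longrightarrow> P x y \<ge> 0"
  shows "zrp_dirichlet V P r f \<ge> 0"
  unfolding zrp_dirichlet_def using assms by (intro divide_nonneg_nonneg sum_nonneg) auto

lemma config_point:
  assumes "v \<in> V" "finite V"
  shows "(\<lambda>x. if x = v then r else 0) \<in> zrp_configs V r"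
  using assms unfolding zrp_configs_def by auto

lemma sum_sq_dev_le:
  fixes g :: "'a \<Rightarrow> real"
  assumes "finite A" "A \<noteq> {}"
  shows "(\<Sum>a\<in>A. (g a - (\<Sum>b\<in>A. g b) / real (card A))^2) \<le> (\<Sum>a\<in>A. (g a - c)^2)"
proof -
  define m where "m = (\<Sum>b\<in>A. g b) / real (card A)"
  have cA: "real (card A) > 0" using assms by (simp add: card_gt_0_iff)
  have sm: "(\<Sum>a\<in>A. g a - m) = 0"
    using cA by (simp add: sum_subtractf m_def)
  have "(\<Sum>a\<in>A. (g a - c)^2) = (\<Sum>a\<in>A. (g a - m)^2 + 2 * (m - c) * (g a - m) + (m - c)^2)"
    by (rule sum.cong) (auto simp: power2_eq_square algebra_simps)
  also have "\<dots> = (\<Sum>a\<in>A. (g a - m)^2) + 2 * (m - c) * (\<Sum>a\<in>A. g a - m) + real (card A) * (m - c)^2"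
    by (simp add: sum.distrib sum_distrib_left)
  also have "\<dots> \<ge> (\<Sum>a\<in>A. (g a - m)^2)" using sm by simp
  finally show ?thesis unfolding m_def .
qed

lemma zrp_var_le:
  assumes "finite (zrp_configs V r)" "zrp_configs V r \<noteq> {}"
  shows "zrp_var V r f \<le> (\<Sum>\<eta>\<in>zrp_configs V r. (f \<eta> - c)^2) / real (card (zrp_configs V r))"
  unfolding zrp_var_def zrp_mean_def
  by (intro divide_right_mono sum_sq_dev_le assms) auto

lemma zrp_var_ne0:
  assumes "finite V" "a \<in> V" "b \<in> V" "a \<noteq> b" "r \<ge> 1"
  shows "\<exists>f. zrp_var V r f \<noteq> 0"
proof (rule ccontr)
  assume nt: "\<not> ?thesis"
  define \<eta>a where "\<eta>a = (\<lambda>x. if x = a then r else 0)"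
  define \<eta>b where "\<eta>b = (\<lambda>x. if x = b then r else 0)"
  define f where "f = (\<lambda>\<eta>. if \<eta> = \<eta>a then 1 else (0::real))"
  let ?O = "zrp_configs V r"
  have fin: "finite ?O" using assms zrp_configs_finite by auto
  have ina: "\<eta>a \<in> ?O" and inb: "\<eta>b \<in> ?O" unfolding \<eta>a_def \<eta>b_def using config_point assms by auto
  have ne: "\<eta>a \<noteq> \<eta>b" using assms unfolding \<eta>a_def \<eta>b_def by (auto simp: fun_eq_iff)
  have cpos: "real (card ?O) > 0" using fin ina by (auto simp: card_gt_0_iff)
  have "zrp_var V r f = 0" using nt by blast
  then have "(\<Sum>\<eta>\<in>?O. (f \<eta> - zrp_mean V r f)^2) = 0" using cpos unfolding zrp_var_def by simp
  then have "\<forall>\<eta>\<in>?O. (f \<eta> - zrp_mean V r f)^2 = 0" using fin by (subst (asm) sum_nonneg_eq_0_iff) auto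
  then have "f \<eta>a = zrp_mean V r f" "f \<eta>b = zrp_mean V r f" using ina inb by auto
  then show False using ne unfolding f_def by auto
qed

lemma single_le_sum3:
  fixes T :: "'a \<Rightarrow> 'b \<Rightarrow> 'c \<Rightarrow> real"
  assumes "finite A" "finite B" "finite C" "a \<in> A" "b \<in> B" "c \<in> C"
    "\<And>a b c. a \<in> A \<Longrightarrow> b \<in> B \<Longrightarrow> c \<in> C \<Longrightarrow> T a b c \<ge> 0"
  shows "T a b c \<le> (\<Sum>a\<in>A. \<Sum>b\<in>B. \<Sum>c\<in>C. T a b c)"
proof -
  have "T a b c \<le> (\<Sum>c\<in>C. T a b c)" using assms by (intro member_le_sum) auto
  also have "\<dots> \<le> (\<Sum>b\<in>B. \<Sum>c\<in>C. T a b c)"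
    using assms by (intro member_le_sum[where f="\<lambda>b. \<Sum>c\<in>C. T a b c"] sum_nonneg) auto
  also have "\<dots> \<le> (\<Sum>a\<in>A. \<Sum>b\<in>B. \<Sum>c\<in>C. T a b c)"
    using assms by (intro member_le_sum[where f="\<lambda>a. \<Sum>b\<in>B. \<Sum>c\<in>C. T a b c"] sum_nonneg) auto
  finally show ?thesis .
qed

lemma zrp_transfer:
  assumes bij: "bij_betw h V W" and fin: "finite V"
  defines "\<Phi> \<equiv> (\<lambda>\<xi> x. if x \<in> V then \<xi> (h x) else 0)"
  shows "zrp_var W r (f \<circ> \<Phi>) = zrp_var V r f"
   and "zrp_dirichlet W P r (f \<circ> \<Phi>) = zrp_dirichlet V (\<lambda>x y. P (h x) (h y)) r f"
proof -
  define g where "g = inv_into V h"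
  define \<Psi> where "\<Psi> = (\<lambda>\<eta> a. if a \<in> W then \<eta> (g a) else (0::nat))"
  have inj: "inj_on h V" and img: "h ` V = W" using bij by (auto simp: bij_betw_def)
  have bijg: "bij_betw g W V" unfolding g_def using bij by (rule bij_betw_inv_into)
  have gh: "g (h x) = x" if "x \<in> V" for x unfolding g_def using inj that by simp
  have hg: "h (g a) = a" "g a \<in> V" if "a \<in> W" for a unfolding g_def using img that
    by (auto simp: f_inv_into_f inv_into_into)
  have bijP: "bij_betw \<Phi> (zrp_configs W r) (zrp_configs V r)"
  proof (rule bij_betw_byWitness[where f'=\<Psi>])
    show "\<forall>a\<in>zrp_configs W r. \<Psi> (\<Phi> a) = a"
      unfolding \<Psi>_def \<Phi>_def zrp_configs_def using hg by (auto simp: fun_eq_iff)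
    show "\<forall>a\<in>zrp_configs V r. \<Phi> (\<Psi> a) = a"
      unfolding \<Psi>_def \<Phi>_def zrp_configs_def using gh img by (auto simp: fun_eq_iff)
    show "\<Phi> ` zrp_configs W r \<subseteq> zrp_configs V r"
    proof
      fix \<eta> assume "\<eta> \<in> \<Phi> ` zrp_configs W r"
      then obtain \<xi> where \<xi>: "\<xi> \<in> zrp_configs W r" "\<eta> = \<Phi> \<xi>" by auto
      have "(\<Sum>x\<in>V. \<eta> x) = (\<Sum>x\<in>V. \<xi> (h x))" unfolding \<xi> \<Phi>_def by simp
      also have "\<dots> = (\<Sum>a\<in>W. \<xi> a)" using bij by (rule sum.reindex_bij_betw)
      finally show "\<eta> \<in> zrp_configs V r" using \<xi> unfolding zrp_configs_def \<Phi>_def by auto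
    qed
    show "\<Psi> ` zrp_configs V r \<subseteq> zrp_configs W r"
    proof
      fix \<xi> assume "\<xi> \<in> \<Psi> ` zrp_configs V r"
      then obtain \<eta> where \<eta>: "\<eta> \<in> zrp_configs V r" "\<xi> = \<Psi> \<eta>" by auto
      have "(\<Sum>a\<in>W. \<xi> a) = (\<Sum>a\<in>W. \<eta> (g a))" unfolding \<eta> \<Psi>_def by simp
      also have "\<dots> = (\<Sum>x\<in>V. \<eta> x)" using bijg by (rule sum.reindex_bij_betw)
      finally show "\<xi> \<in> zrp_configs W r" using \<eta> unfolding zrp_configs_def \<Psi>_def by auto
    qed
  qed
  have card: "card (zrp_configs W r) = card (zrp_configs V r)" using bijP by (rule bij_betw_same_card)
  have sumP: "(\<Sum>\<xi>\<in>zrp_configs W r. F (\<Phi> \<xi>)) = (\<Sum>\<eta>\<in>zrp_configs V r. F \<eta>)" for F :: "_ \<Rightarrow> real"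
    using bijP by (rule sum.reindex_bij_betw)
  have mean: "zrp_mean W r (f \<circ> \<Phi>) = zrp_mean V r f"
    unfolding zrp_mean_def card using sumP[of f] by simp
  show "zrp_var W r (f \<circ> \<Phi>) = zrp_var V r f"
    unfolding zrp_var_def card mean using sumP[of "\<lambda>\<eta>. (f \<eta> - zrp_mean V r f)^2"] by simp
  have mv: "\<Phi> (zrp_move \<xi> (h x) (h y)) = zrp_move (\<Phi> \<xi>) x y" if "x \<in> V" "y \<in> V" for \<xi> x y
  proof (rule ext)
    fix z show "\<Phi> (zrp_move \<xi> (h x) (h y)) z = zrp_move (\<Phi> \<xi>) x y z"
    proof (cases "z \<in> V")
      case True
      have "h z = h x \<longleftrightarrow> z = x" "h z = h y \<longleftrightarrow> z = y" "h x = h y \<longleftrightarrow> x = y" "h y = h x \<longleftrightarrow> y = x"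
        using inj True that by (auto dest: inj_onD)
      then show ?thesis using True that unfolding \<Phi>_def zrp_move_def by simp
    next
      case False
      then have "z \<noteq> x" "z \<noteq> y" using that by auto
      then show ?thesis using False that unfolding \<Phi>_def zrp_move_def by simp
    qed
  qed
  have \<Phi>x: "\<Phi> \<xi> x = \<xi> (h x)" if "x \<in> V" for \<xi> x using that unfolding \<Phi>_def by simp
  have re2: "(\<Sum>a\<in>W. \<Sum>b\<in>W. G a b) = (\<Sum>x\<in>V. \<Sum>y\<in>V. G (h x) (h y))" for G :: "_ \<Rightarrow> _ \<Rightarrow> real"
  proof -
    have "(\<Sum>a\<in>W. \<Sum>b\<in>W. G a b) = (\<Sum>x\<in>V. \<Sum>b\<in>W. G (h x) b)"
      using sum.reindex_bij_betw[OF bij, of "\<lambda>a. \<Sum>b\<in>W. G a b"] by simp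
    also have "\<dots> = (\<Sum>x\<in>V. \<Sum>y\<in>V. G (h x) (h y))"
      by (intro sum.cong refl) (rule sum.reindex_bij_betw[OF bij, symmetric])
    finally show ?thesis .
  qed
  have "(\<Sum>\<xi>\<in>zrp_configs W r. \<Sum>a\<in>W. \<Sum>b\<in>W.
          (if 0 < \<xi> a then P a b * ((f \<circ> \<Phi>) (zrp_move \<xi> a b) - (f \<circ> \<Phi>) \<xi>)^2 else 0))
      = (\<Sum>\<xi>\<in>zrp_configs W r. \<Sum>x\<in>V. \<Sum>y\<in>V.
          (if 0 < \<xi> (h x) then P (h x) (h y) * ((f \<circ> \<Phi>) (zrp_move \<xi> (h x) (h y)) - (f \<circ> \<Phi>) \<xi>)^2 else 0))"
  proof (rule sum.cong[OF refl])
    fix \<xi>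
    show "(\<Sum>a\<in>W. \<Sum>b\<in>W.
          (if 0 < \<xi> a then P a b * ((f \<circ> \<Phi>) (zrp_move \<xi> a b) - (f \<circ> \<Phi>) \<xi>)^2 else 0))
      = (\<Sum>x\<in>V. \<Sum>y\<in>V.
          (if 0 < \<xi> (h x) then P (h x) (h y) * ((f \<circ> \<Phi>) (zrp_move \<xi> (h x) (h y)) - (f \<circ> \<Phi>) \<xi>)^2 else 0))"
      by (rule re2)
  qed
  also have "\<dots> = (\<Sum>\<xi>\<in>zrp_configs W r. \<Sum>x\<in>V. \<Sum>y\<in>V.
          (if 0 < \<Phi> \<xi> x then P (h x) (h y) * (f (zrp_move (\<Phi> \<xi>) x y) - f (\<Phi> \<xi>))^2 else 0))"
    using mv by (intro sum.cong refl) (simp add: \<Phi>x)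
  also have "\<dots> = (\<Sum>\<eta>\<in>zrp_configs V r. \<Sum>x\<in>V. \<Sum>y\<in>V.
          (if 0 < \<eta> x then P (h x) (h y) * (f (zrp_move \<eta> x y) - f \<eta>)^2 else 0))"
    by (rule sumP)
  finally show "zrp_dirichlet W P r (f \<circ> \<Phi>) = zrp_dirichlet V (\<lambda>x y. P (h x) (h y)) r f"
    unfolding zrp_dirichlet_def card by simp
qed

lemma complete_var_bound:
  assumes n2: "n \<ge> 2" and r1: "r \<ge> 1"
  shows "zrp_var {0..<n} r f \<le> 4^r * (real n - 1) * (2 * real (card (zrp_configs {0..<n} r)))
             * zrp_dirichlet {0..<n} (complete_kernel n) r f"
proof -
  define W where "W = {0..<(n::nat)}"
  define \<Omega> where "\<Omega> = zrp_configs W r"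
  define P where "P = complete_kernel n"
  define S where "S = (\<Sum>\<eta>\<in>\<Omega>. \<Sum>x\<in>W. \<Sum>y\<in>W.
        (if 0 < \<eta> x then P x y * (f (zrp_move \<eta> x y) - f \<eta>)^2 else 0))"
  define \<eta>0 where "\<eta>0 = (\<lambda>x::nat. if x = 0 then r else 0)"
  have finW: "finite W" unfolding W_def by simp
  have fin: "finite \<Omega>" unfolding \<Omega>_def using finW by (rule zrp_configs_finite)
  have w01: "0 \<in> W" "1 \<in> W" using n2 unfolding W_def by auto
  have in0: "\<eta>0 \<in> \<Omega>" unfolding \<Omega>_def \<eta>0_def using config_point[OF w01(1) finW] by simp
  have Pnn: "P x y \<ge> 0" for x y unfolding P_def complete_kernel_def using n2 by auto
  have Snn: "S \<ge> 0" unfolding S_def using Pnn by (intro sum_nonneg) auto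
  have nm1: "real n - 1 > 0" using n2 by simp
  have key: "\<forall>\<eta>\<in>\<Omega>. r - \<eta> 0 = m \<longrightarrow> (f \<eta> - f \<eta>0)^2 \<le> 4^m * (real n - 1) * S" for m
  proof (induction m)
    case 0
    show ?case
    proof (intro ballI impI)
      fix \<eta> assume h: "\<eta> \<in> \<Omega>" "r - \<eta> 0 = 0"
      have sr: "(\<Sum>x\<in>W. \<eta> x) = r" using h unfolding \<Omega>_def zrp_configs_def by simp
      have split: "(\<Sum>x\<in>W. \<eta> x) = \<eta> 0 + (\<Sum>x\<in>W-{0}. \<eta> x)" using finW w01 by (intro sum.remove) auto
      have "(\<Sum>x\<in>W-{0}. \<eta> x) = 0" using sr split h by simp
      then have z: "\<forall>x\<in>W-{0}. \<eta> x = 0" using finW by simp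
      have "\<eta> = \<eta>0"
      proof
        fix x show "\<eta> x = \<eta>0 x"
          using z h sr split unfolding \<eta>0_def \<Omega>_def zrp_configs_def by (cases "x \<in> W") auto
      qed
      then show "(f \<eta> - f \<eta>0)^2 \<le> 4^0 * (real n - 1) * S" using Snn nm1 by simp
    qed
  next
    case (Suc m)
    show ?case
    proof (intro ballI impI)
      fix \<eta> assume h: "\<eta> \<in> \<Omega>" "r - \<eta> 0 = Suc m"
      have sr: "(\<Sum>x\<in>W. \<eta> x) = r" using h unfolding \<Omega>_def zrp_configs_def by simp
      have split: "(\<Sum>x\<in>W. \<eta> x) = \<eta> 0 + (\<Sum>x\<in>W-{0}. \<eta> x)" using finW w01 by (intro sum.remove) auto
      have "(\<Sum>x\<in>W-{0}. \<eta> x) \<noteq> 0" using sr split h by simp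
      then obtain x where x: "x \<in> W" "x \<noteq> 0" "0 < \<eta> x" using finW
        by (metis DiffD1 DiffD2 gr0I singletonI sum.neutral)
      define \<eta>' where "\<eta>' = zrp_move \<eta> x 0"
      have in': "\<eta>' \<in> \<Omega>" unfolding \<eta>'_def \<Omega>_def
        using zrp_move_in[of \<eta> W r x 0] h x w01 finW unfolding \<Omega>_def by simp
      have "\<eta>' 0 = \<eta> 0 + 1" unfolding \<eta>'_def zrp_move_def using x by simp
      then have "r - \<eta>' 0 = m" using h by simp
      then have IH: "(f \<eta>' - f \<eta>0)^2 \<le> 4^m * (real n - 1) * S" using Suc.IH in' by blast
      have "P x 0 * (f (zrp_move \<eta> x 0) - f \<eta>)^2 \<le> S"
        using single_le_sum3[of \<Omega> W W \<eta> x 0 "\<lambda>\<eta> x y. (if 0 < \<eta> x then P x y * (f (zrp_move \<eta> x y) - f \<eta>)^2 else 0)"]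
          fin finW h x w01 Pnn unfolding S_def by simp
      moreover have "P x 0 = 1 / (real n - 1)" unfolding P_def complete_kernel_def using x by simp
      ultimately have D: "(f \<eta>' - f \<eta>)^2 \<le> (real n - 1) * S"
        unfolding \<eta>'_def using nm1 by (simp add: field_simps)
      have "(f \<eta> - f \<eta>0)^2 \<le> 2 * (f \<eta>' - f \<eta>)^2 + 2 * (f \<eta>' - f \<eta>0)^2"
      proof -
        have "2 * (f \<eta>' - f \<eta>)^2 + 2 * (f \<eta>' - f \<eta>0)^2 - (f \<eta> - f \<eta>0)^2
              = (2 * f \<eta>' - f \<eta> - f \<eta>0)^2" by (simp add: power2_eq_square algebra_simps)
        moreover have "(2 * f \<eta>' - f \<eta> - f \<eta>0)^2 \<ge> 0" by simp
        ultimately show ?thesis by linarith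
      qed
      also have "\<dots> \<le> 2 * ((real n - 1) * S) + 2 * (4^m * (real n - 1) * S)" using D IH by simp
      also have "\<dots> \<le> 4 ^ Suc m * (real n - 1) * S"
      proof -
        have "(1::real) \<le> 4^m" by simp
        moreover have "(real n - 1) * S \<ge> 0" using nm1 Snn by simp
        ultimately have "1 * ((real n - 1) * S) \<le> 4^m * ((real n - 1) * S)"
          by (intro mult_right_mono) auto
        then have "2 * ((real n - 1) * S) \<le> 2 * (4^m * (real n - 1) * S)" by (simp add: mult.assoc)
        then show ?thesis by (simp add: algebra_simps)
      qed
      finally show "(f \<eta> - f \<eta>0)^2 \<le> 4 ^ Suc m * (real n - 1) * S" .
    qed
  qed
  have each: "(f \<eta> - f \<eta>0)^2 \<le> 4^r * (real n - 1) * S" if "\<eta> \<in> \<Omega>" for \<eta>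
  proof -
    have "(f \<eta> - f \<eta>0)^2 \<le> 4^(r - \<eta> 0) * (real n - 1) * S" using key that by blast
    also have "\<dots> \<le> 4^r * (real n - 1) * S"
      using nm1 Snn by (intro mult_right_mono) (auto intro!: power_increasing)
    finally show ?thesis .
  qed
  have Npos: "real (card \<Omega>) > 0" using fin in0 by (auto simp: card_gt_0_iff)
  have "zrp_var W r f \<le> (\<Sum>\<eta>\<in>\<Omega>. (f \<eta> - f \<eta>0)^2) / real (card \<Omega>)"
    unfolding \<Omega>_def by (rule zrp_var_le) (use fin in0 in \<open>auto simp: \<Omega>_def\<close>)
  also have "\<dots> \<le> (\<Sum>\<eta>\<in>\<Omega>. 4^r * (real n - 1) * S) / real (card \<Omega>)"
    using each Npos by (intro divide_right_mono sum_mono) auto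
  also have "\<dots> = 4^r * (real n - 1) * S" using Npos by simp
  also have "\<dots> = 4^r * (real n - 1) * (2 * real (card \<Omega>)) * zrp_dirichlet W P r f"
    unfolding zrp_dirichlet_def S_def \<Omega>_def using Npos by (simp add: \<Omega>_def)
  finally show ?thesis unfolding W_def P_def \<Omega>_def .
qed

definition tstep :: "nat \<Rightarrow> nat \<Rightarrow> (nat \<Rightarrow> nat) \<Rightarrow> (nat \<Rightarrow> nat)" where
  "tstep L j u = u(j := (u j + 1) mod L)"
definition tz :: "nat \<Rightarrow> (nat \<Rightarrow> nat) \<Rightarrow> (nat \<Rightarrow> nat) \<Rightarrow> nat \<Rightarrow> nat \<Rightarrow> (nat \<Rightarrow> nat)" where
  "tz L x y j s = (\<lambda>k. if k < j then y k else if k = j then (x j + s) mod L else x k)"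
definition tw :: "(nat \<Rightarrow> nat) \<Rightarrow> (nat \<Rightarrow> nat) \<Rightarrow> nat \<Rightarrow> (nat \<Rightarrow> nat)" where
  "tw x y j = (\<lambda>k. if k < j then x k else y k)"
definition tdelta :: "nat \<Rightarrow> (nat \<Rightarrow> nat) \<Rightarrow> (nat \<Rightarrow> nat) \<Rightarrow> nat \<Rightarrow> nat" where
  "tdelta L x y j = (y j + L - x j) mod L"

lemma tz_in:
  assumes "x \<in> torus_vertices d L" "y \<in> torus_vertices d L" "j < d" "L > 0"
  shows "tz L x y j s \<in> torus_vertices d L"
  using assms unfolding torus_vertices_def tz_def by auto

lemma tw_in:
  assumes "x \<in> torus_vertices d L" "y \<in> torus_vertices d L" "j < d"
  shows "tw x y j \<in> torus_vertices d L"
  using assms unfolding torus_vertices_def tw_def by auto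

lemma tv_mod: "x \<in> torus_vertices d L \<Longrightarrow> x k mod L = x k"
  unfolding torus_vertices_def by (cases "k < d") auto

lemma tz_start:
  assumes "x \<in> torus_vertices d L"
  shows "tz L x y 0 0 = x"
  using assms tv_mod[OF assms] unfolding tz_def by (auto simp: fun_eq_iff)

lemma tz_end:
  assumes "x \<in> torus_vertices d L" "y \<in> torus_vertices d L"
  shows "tz L x y d 0 = y"
  using assms unfolding torus_vertices_def tz_def by (auto simp: fun_eq_iff)

lemma tz_block:
  assumes "x \<in> torus_vertices d L" "y \<in> torus_vertices d L" "j < d"
  shows "tz L x y j (tdelta L x y j) = tz L x y (Suc j) 0"
proof -
  have xl: "x j < L" and yl: "y j < L" using assms unfolding torus_vertices_def by auto
  have "(x j + (y j + L - x j) mod L) mod L = y j"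
  proof -
    have "(x j + (y j + L - x j) mod L) mod L = (x j + (y j + L - x j)) mod L"
      by (simp add: mod_add_right_eq)
    also have "x j + (y j + L - x j) = y j + L" using xl by simp
    finally show ?thesis using yl by simp
  qed
  moreover have "x (Suc j) mod L = x (Suc j)" using tv_mod[OF assms(1)] .
  ultimately show ?thesis unfolding tz_def tdelta_def
    by (auto simp: fun_eq_iff less_Suc_eq)
qed

lemma tz_Suc: "tz L x y j (Suc s) = tstep L j (tz L x y j s)"
  unfolding tz_def tstep_def by (auto simp: fun_eq_iff mod_Suc_eq)

lemma tdelta_le: "L > 0 \<Longrightarrow> tdelta L x y j \<le> L - 1"
  unfolding tdelta_def using mod_less_divisor[of L] by (metis Suc_pred' less_Suc_eq_le)

lemma tstep_in:
  assumes "u \<in> torus_vertices d L" "j < d" "L > 0"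
  shows "tstep L j u \<in> torus_vertices d L"
  using assms unfolding torus_vertices_def tstep_def by auto

lemma tstep_adj:
  assumes "j < d"
  shows "torus_adj d L u (tstep L j u)"
  using assms unfolding torus_adj_def tstep_def by auto

lemma tstep_inj:
  assumes "u \<in> torus_vertices d L" "L \<ge> 2"
  shows "inj_on (\<lambda>j. tstep L j u) {..<d}"
proof (rule inj_onI)
  fix i j assume ij: "i \<in> {..<d}" "j \<in> {..<d}" "tstep L i u = tstep L j u"
  show "i = j"
  proof (rule ccontr)
    assume ne: "i \<noteq> j"
    have ul: "u i < L" using assms ij unfolding torus_vertices_def by auto
    have "tstep L i u i = (u i + 1) mod L" unfolding tstep_def by simp
    moreover have "tstep L j u i = u i" unfolding tstep_def using ne by simp
    moreover have "(u i + 1) mod L \<noteq> u i"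
    proof (cases "u i + 1 < L")
      case True then show ?thesis by simp
    next
      case False then have "u i + 1 = L" using ul by simp
      then show ?thesis using assms by simp
    qed
    ultimately show False using ij by metis
  qed
qed

lemma add_mod_cancel_aux: "a \<le> b \<Longrightarrow> b < L \<Longrightarrow> (a + s) mod L = (b + s) mod L \<Longrightarrow> a = (b::nat)"
proof -
  assume h: "a \<le> b" "b < L" "(a + s) mod L = (b + s) mod L"
  then have "L dvd (b + s) - (a + s)" using mod_eq_dvd_iff_nat[of "a+s" "b+s" L] by simp
  then have "L dvd b - a" by simp
  moreover have "b - a < L" using h by simp
  ultimately have "b - a = 0" by (metis dvd_imp_le not_less zero_less_iff_neq_zero)
  then show "a = b" using h by simp
qed
lemma add_mod_cancel: "a < L \<Longrightarrow> b < L \<Longrightarrow> (a + s) mod L = (b + s) mod L \<Longrightarrow> a = (b::nat)"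
  by (metis add_mod_cancel_aux nat_le_linear)

lemma tz_tw_inj:
  assumes "x \<in> torus_vertices d L" "y \<in> torus_vertices d L"
    "x' \<in> torus_vertices d L" "y' \<in> torus_vertices d L" "j < d"
    "tz L x y j s = tz L x' y' j s" "tw x y j = tw x' y' j"
  shows "x = x' \<and> y = y'"
proof -
  have xj: "x j = x' j"
  proof -
    have "(x j + s) mod L = (x' j + s) mod L" using fun_cong[OF assms(6), of j] unfolding tz_def by simp
    moreover have "x j < L" "x' j < L" using assms unfolding torus_vertices_def by auto
    ultimately show ?thesis using add_mod_cancel by blast
  qed
  have "x k = x' k \<and> y k = y' k" for k
  proof -
    have a: "tz L x y j s k = tz L x' y' j s k" "tw x y j k = tw x' y' j k" using assms(6,7) by auto
    show ?thesis
    proof (cases "k < j")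
      case True then show ?thesis using a unfolding tz_def tw_def by simp
    next
      case False
      show ?thesis
      proof (cases "k = j")
        case True then show ?thesis using a xj unfolding tz_def tw_def by simp
      next
        case False2: False
        then show ?thesis using a False unfolding tz_def tw_def by simp
      qed
    qed
  qed
  then show ?thesis by (auto simp: fun_eq_iff)
qed

definition tdiff :: "(((nat \<Rightarrow> nat) \<Rightarrow> nat) \<Rightarrow> real) \<Rightarrow> nat \<Rightarrow> ((nat \<Rightarrow> nat) \<Rightarrow> nat) \<Rightarrow> (nat \<Rightarrow> nat) \<Rightarrow> (nat \<Rightarrow> nat) \<Rightarrow> nat \<Rightarrow> nat \<Rightarrow> real" where
  "tdiff f L \<eta> x y j s = f (zrp_move (zrp_move \<eta> x (tz L x y j s)) (tz L x y j s) (tstep L j (tz L x y j s)))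
       - f (zrp_move \<eta> x (tz L x y j s))"

lemma telescope:
  assumes "x \<in> torus_vertices d L" "y \<in> torus_vertices d L" "0 < \<eta> x"
  shows "f (zrp_move \<eta> x y) - f \<eta> = (\<Sum>j<d. \<Sum>s<tdelta L x y j. tdiff f L \<eta> x y j s)"
proof -
  define G where "G j s = f (zrp_move \<eta> x (tz L x y j s))" for j s
  have a: "tdiff f L \<eta> x y j s = G j (Suc s) - G j s" for j s
    unfolding tdiff_def G_def using assms(3) by (simp add: zrp_move_move tz_Suc)
  have "(\<Sum>s<tdelta L x y j. tdiff f L \<eta> x y j s) = G (Suc j) 0 - G j 0" if "j < d" for j
  proof -
    have "(\<Sum>s<tdelta L x y j. tdiff f L \<eta> x y j s) = G j (tdelta L x y j) - G j 0"
      unfolding a by (rule sum_lessThan_telescope)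
    also have "G j (tdelta L x y j) = G (Suc j) 0" unfolding G_def using tz_block[OF assms(1,2) that] by simp
    finally show ?thesis .
  qed
  then have "(\<Sum>j<d. \<Sum>s<tdelta L x y j. tdiff f L \<eta> x y j s) = (\<Sum>j<d. G (Suc j) 0 - G j 0)"
    by (intro sum.cong) auto
  also have "\<dots> = G d 0 - G 0 0" by (rule sum_lessThan_telescope)
  also have "\<dots> = f (zrp_move \<eta> x y) - f \<eta>"
    unfolding G_def using tz_start[OF assms(1)] tz_end[OF assms(1,2)] zrp_move_self[of \<eta> x, OF assms(3)] by simp
  finally show ?thesis by simp
qed

lemma cs_bound:
  assumes "x \<in> torus_vertices d L" "y \<in> torus_vertices d L" "0 < \<eta> x" "L > 0"
  shows "(f (zrp_move \<eta> x y) - f \<eta>)^2 \<le> real d * real (L - 1) * (\<Sum>j<d. \<Sum>s<L-1. (tdiff f L \<eta> x y j s)^2)"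
proof -
  define A where "A j = (\<Sum>s<tdelta L x y j. tdiff f L \<eta> x y j s)" for j
  have Aj: "(A j)^2 \<le> real (L - 1) * (\<Sum>s<L-1. (tdiff f L \<eta> x y j s)^2)" for j
  proof -
    have le: "tdelta L x y j \<le> L - 1" using tdelta_le[OF assms(4)] .
    have "(A j)^2 \<le> (\<Sum>s<tdelta L x y j. (tdiff f L \<eta> x y j s)^2) * real (tdelta L x y j)"
      unfolding A_def using sum_squared_le_sum_of_squares[of "tdiff f L \<eta> x y j" "{..<tdelta L x y j}"] by simp
    also have "\<dots> \<le> (\<Sum>s<L-1. (tdiff f L \<eta> x y j s)^2) * real (L - 1)"
      using le by (intro mult_mono sum_mono2 sum_nonneg) auto
    finally show ?thesis by (simp add: mult.commute)
  qed
  have "(f (zrp_move \<eta> x y) - f \<eta>)^2 = (\<Sum>j<d. A j)^2" using telescope[of x d L y \<eta> f, OF assms(1-3)] unfolding A_def by simp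
  also have "\<dots> \<le> (\<Sum>j<d. (A j)^2) * real d"
    using sum_squared_le_sum_of_squares[of A "{..<d}"] by simp
  also have "\<dots> \<le> (\<Sum>j<d. real (L - 1) * (\<Sum>s<L-1. (tdiff f L \<eta> x y j s)^2)) * real d"
    using Aj by (intro mult_right_mono sum_mono) auto
  also have "\<dots> = real d * real (L - 1) * (\<Sum>j<d. \<Sum>s<L-1. (tdiff f L \<eta> x y j s)^2)"
    by (simp add: sum_distrib_left algebra_simps)
  finally show ?thesis .
qed

lemma sum3_prod:
  "(\<Sum>a\<in>A. \<Sum>b\<in>B. \<Sum>c\<in>C. F a b c) = (\<Sum>t\<in>A \<times> B \<times> C. F (fst t) (fst (snd t)) (snd (snd t)))"
proof -
  have "(\<Sum>a\<in>A. \<Sum>b\<in>B. \<Sum>c\<in>C. F a b c) = (\<Sum>a\<in>A. \<Sum>p\<in>B \<times> C. F a (fst p) (snd p))"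
    by (intro sum.cong refl) (simp add: sum.cartesian_product case_prod_beta)
  also have "\<dots> = (\<Sum>t\<in>A \<times> (B \<times> C). F (fst t) (fst (snd t)) (snd (snd t)))"
    by (simp add: sum.cartesian_product case_prod_beta)
  finally show ?thesis .
qed

lemma zrp_move_ne0: "zrp_move \<eta> x z z \<noteq> 0"
  using zrp_move_pos[of \<eta> x z] by simp

lemma inj_bound:
  fixes f :: "((nat \<Rightarrow> nat) \<Rightarrow> nat) \<Rightarrow> real"
  assumes j: "j < d" and L: "L > 0" and finV: "finite (torus_vertices d L)"
  shows "(\<Sum>\<eta>\<in>zrp_configs (torus_vertices d L) r. \<Sum>x\<in>torus_vertices d L. \<Sum>y\<in>torus_vertices d L.
            if 0 < \<eta> x then (tdiff f L \<eta> x y j s)^2 else 0)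
       \<le> real (card (torus_vertices d L)) *
         (\<Sum>\<zeta>\<in>zrp_configs (torus_vertices d L) r. \<Sum>u\<in>torus_vertices d L.
            if 0 < \<zeta> u then (f (zrp_move \<zeta> u (tstep L j u)) - f \<zeta>)^2 else 0)"
proof -
  define V where "V = torus_vertices d L"
  define \<Omega> where "\<Omega> = zrp_configs V r"
  have fin: "finite \<Omega>" unfolding \<Omega>_def using finV unfolding V_def by (rule zrp_configs_finite)
  have finV': "finite V" using finV unfolding V_def .
  define \<Phi> where "\<Phi> t = (case t of (\<eta>, x, y) \<Rightarrow> (zrp_move \<eta> x (tz L x y j s), tz L x y j s, tw x y j))" for t
  define G where "G t = (case t of (\<zeta>, u, w::nat \<Rightarrow> nat) \<Rightarrow>
     if 0 < \<zeta> u then (f (zrp_move \<zeta> u (tstep L j u)) - f \<zeta>)^2 else 0)" for t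
  define A where "A = {t \<in> \<Omega> \<times> V \<times> V. 0 < fst t (fst (snd t))}"
  have Gnn: "G t \<ge> 0" for t unfolding G_def by (auto split: prod.splits)
  have finB: "finite (\<Omega> \<times> V \<times> V)" using fin finV' by simp
  have "(\<Sum>\<eta>\<in>\<Omega>. \<Sum>x\<in>V. \<Sum>y\<in>V. if 0 < \<eta> x then (tdiff f L \<eta> x y j s)^2 else 0)
      = (\<Sum>t\<in>\<Omega> \<times> V \<times> V. if 0 < fst t (fst (snd t)) then G (\<Phi> t) else 0)"
    unfolding sum3_prod
    by (intro sum.cong refl) (auto simp: G_def \<Phi>_def tdiff_def zrp_move_pos zrp_move_ne0 split: prod.splits)
  also have "\<dots> = (\<Sum>t\<in>A. G (\<Phi> t))"
    unfolding A_def using finB by (simp add: sum.inter_filter)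
  also have "\<dots> = (\<Sum>t\<in>\<Phi> ` A. G t)"
  proof -
    have "inj_on \<Phi> A"
    proof (rule inj_onI)
      fix t t' assume tA: "t \<in> A" "t' \<in> A" and eq: "\<Phi> t = \<Phi> t'"
      obtain \<eta> x y where t: "t = (\<eta>, x, y)" by (cases t) auto
      obtain \<eta>' x' y' where t': "t' = (\<eta>', x', y')" by (cases t') auto
      have h: "\<eta> \<in> \<Omega>" "x \<in> V" "y \<in> V" "0 < \<eta> x" using tA t unfolding A_def by auto
      have h': "\<eta>' \<in> \<Omega>" "x' \<in> V" "y' \<in> V" "0 < \<eta>' x'" using tA t' unfolding A_def by auto
      have e: "zrp_move \<eta> x (tz L x y j s) = zrp_move \<eta>' x' (tz L x' y' j s)"
        "tz L x y j s = tz L x' y' j s" "tw x y j = tw x' y' j"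
        using eq unfolding t t' \<Phi>_def by auto
      have xy: "x = x' \<and> y = y'" using tz_tw_inj[of x d L y x' y' j s] h h' e j unfolding V_def by simp
      have "\<eta> = zrp_move (zrp_move \<eta> x (tz L x y j s)) (tz L x y j s) x" using zrp_move_back[of \<eta> x] h by simp
      also have "\<dots> = zrp_move (zrp_move \<eta>' x' (tz L x' y' j s)) (tz L x' y' j s) x'" using e xy by simp
      also have "\<dots> = \<eta>'" using zrp_move_back[of \<eta>' x'] h' by simp
      finally show "t = t'" using t t' xy by simp
    qed
    then show ?thesis by (simp add: sum.reindex)
  qed
  also have "\<dots> \<le> (\<Sum>t\<in>\<Omega> \<times> V \<times> V. G t)"
  proof (rule sum_mono2[OF finB])
    show "\<Phi> ` A \<subseteq> \<Omega> \<times> V \<times> V"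
    proof
      fix t' assume "t' \<in> \<Phi> ` A"
      then obtain \<eta> x y where tA: "(\<eta>, x, y) \<in> A" and t': "t' = \<Phi> (\<eta>, x, y)" by auto
      have h: "\<eta> \<in> \<Omega>" "x \<in> V" "y \<in> V" "0 < \<eta> x" using tA unfolding A_def by auto
      have z: "tz L x y j s \<in> V" using tz_in[of x d L y j s] h j L unfolding V_def by simp
      have w: "tw x y j \<in> V" using tw_in[of x d L y j] h j unfolding V_def by simp
      have m: "zrp_move \<eta> x (tz L x y j s) \<in> \<Omega>"
        using zrp_move_in[of \<eta> V r x "tz L x y j s"] h z finV' unfolding \<Omega>_def by simp
      show "t' \<in> \<Omega> \<times> V \<times> V" using z w m unfolding t' \<Phi>_def by simp
    qed
  qed (use Gnn in auto)
  also have "\<dots> = (\<Sum>\<zeta>\<in>\<Omega>. \<Sum>u\<in>V. \<Sum>w\<in>V. G (\<zeta>, u, w))"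
    unfolding sum3_prod by simp
  also have "\<dots> = real (card V) * (\<Sum>\<zeta>\<in>\<Omega>. \<Sum>u\<in>V.
            if 0 < \<zeta> u then (f (zrp_move \<zeta> u (tstep L j u)) - f \<zeta>)^2 else 0)"
    unfolding G_def by (simp add: sum_distrib_left)
  finally show ?thesis unfolding V_def \<Omega>_def .
qed

lemma torus_fin_card:
  shows "finite (torus_vertices d L) \<and> card (torus_vertices d L) = L ^ d"
proof -
  have b: "bij_betw (\<lambda>x. restrict x {..<d}) (torus_vertices d L) (PiE {..<d} (\<lambda>_. {..<L}))"
  proof (rule bij_betw_byWitness[where f'="\<lambda>g i. if i < d then g i else 0"])
    show "\<forall>a\<in>torus_vertices d L. (\<lambda>g i. if i < d then g i else 0) (restrict a {..<d}) = a"
      unfolding torus_vertices_def by (auto simp: fun_eq_iff)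
    show "\<forall>a'\<in>PiE {..<d} (\<lambda>_. {..<L}). restrict ((\<lambda>g i. if i < d then g i else 0) a') {..<d} = a'"
      by (auto simp: fun_eq_iff PiE_def extensional_def)
    show "(\<lambda>x. restrict x {..<d}) ` torus_vertices d L \<subseteq> PiE {..<d} (\<lambda>_. {..<L})"
      unfolding torus_vertices_def by (auto simp: PiE_def Pi_def extensional_def)
    show "(\<lambda>g i. if i < d then g i else 0) ` PiE {..<d} (\<lambda>_. {..<L}) \<subseteq> torus_vertices d L"
      unfolding torus_vertices_def by (auto simp: PiE_def Pi_def)
  qed
  have "finite (PiE {..<d} (\<lambda>_. {..<L::nat}))" by (simp add: finite_PiE)
  moreover have "card (PiE {..<d} (\<lambda>_. {..<L::nat})) = L ^ d" by (simp add: card_PiE)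
  ultimately show ?thesis using b bij_betw_finite bij_betw_same_card by metis
qed

lemma torus_lb:
  fixes F :: "(nat \<Rightarrow> nat) \<Rightarrow> real"
  assumes u: "u \<in> torus_vertices d L" and L: "L \<ge> 2" and d: "d \<ge> 1"
    and F: "\<And>v. F v \<ge> 0"
  shows "(\<Sum>j<d. F (tstep L j u)) \<le> 2 * real d * (\<Sum>v\<in>torus_vertices d L. torus_kernel d L u v * F v)"
proof -
  define T where "T = (\<lambda>j. tstep L j u) ` {..<d}"
  have finV: "finite (torus_vertices d L)" using torus_fin_card by blast
  have TV: "T \<subseteq> torus_vertices d L" unfolding T_def using tstep_in[OF u] L by auto
  have adj: "torus_kernel d L u v = 1 / (2 * real d)" if "v \<in> T" for v
    using that tstep_adj unfolding T_def torus_kernel_def by auto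
  have "(\<Sum>j<d. F (tstep L j u)) = (\<Sum>v\<in>T. F v)"
    unfolding T_def using tstep_inj[OF u L] by (simp add: sum.reindex)
  also have "\<dots> = 2 * real d * (\<Sum>v\<in>T. torus_kernel d L u v * F v)"
    using d adj by (simp add: sum_distrib_left)
  also have "\<dots> \<le> 2 * real d * (\<Sum>v\<in>torus_vertices d L. torus_kernel d L u v * F v)"
    using TV finV F by (intro mult_left_mono sum_mono2) (auto simp: torus_kernel_def)
  finally show ?thesis .
qed

lemma swap3:
  "(\<Sum>a\<in>A. \<Sum>j\<in>J. \<Sum>s\<in>S. F a j s) = (\<Sum>j\<in>J. \<Sum>s\<in>S. \<Sum>a\<in>A. F a j s)"
proof -
  have "(\<Sum>a\<in>A. \<Sum>j\<in>J. \<Sum>s\<in>S. F a j s) = (\<Sum>j\<in>J. \<Sum>a\<in>A. \<Sum>s\<in>S. F a j s)" by (rule sum.swap)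
  also have "\<dots> = (\<Sum>j\<in>J. \<Sum>s\<in>S. \<Sum>a\<in>A. F a j s)" by (intro sum.cong refl) (rule sum.swap)
  finally show ?thesis .
qed

lemma t1: fixes l m :: real assumes "l \<le> m" "l \<ge> 3"
  shows "(l - 1)^2 * m \<le> l ^ 2 * (m - 1)"
proof -
  have P: "l * (2 * l - 1) \<le> m * (2 * l - 1)" using assms by (intro mult_right_mono) auto
  have A: "(l-1)^2*m = l*l*m - 2*(l*m) + m" by (simp add: power2_eq_square algebra_simps)
  have B: "l^2*(m-1) = l*l*m - l*l" by (simp add: power2_eq_square algebra_simps)
  have C: "l*(2*l-1) = 2*(l*l) - l" by (simp add: algebra_simps)
  have D: "m*(2*l-1) = 2*(l*m) - m" by (simp add: algebra_simps)
  have E: "l * 1 \<le> l * l" using assms by (intro mult_left_mono) auto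
  show ?thesis using P A B C D E by linarith
qed
lemma t2: fixes l m a :: real assumes "a \<le> l ^ 2 * (m - 1)" "m - 1 > 0"
  shows "a / (m - 1) \<le> l ^ 2"
  using assms by (simp add: divide_le_eq)

lemma torus_comparison:
  fixes f :: "((nat \<Rightarrow> nat) \<Rightarrow> nat) \<Rightarrow> real"
  assumes d: "d \<ge> 1" and L: "L \<ge> 3" and h: "bij_betw h (torus_vertices d L) {0..<L^d}"
  shows "zrp_dirichlet (torus_vertices d L) (\<lambda>x y. complete_kernel (L^d) (h x) (h y)) r f
         \<le> 2 * real d ^ 2 * real L ^ 2 * zrp_dirichlet (torus_vertices d L) (torus_kernel d L) r f"
proof -
  define V where "V = torus_vertices d L"
  define \<Omega> where "\<Omega> = zrp_configs V r"
  define n where "n = L ^ d"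
  define Q where "Q x y = complete_kernel n (h x) (h y)" for x y
  define D where "D \<eta> x y = (f (zrp_move \<eta> x y) - f \<eta>)^2" for \<eta> x y
  have finV: "finite V" and cardV: "card V = n" using torus_fin_card unfolding V_def n_def by auto
  have fin: "finite \<Omega>" unfolding \<Omega>_def using finV by (rule zrp_configs_finite)
  have Lpos: "L > 0" using L by simp
  have nL: "n \<ge> L" unfolding n_def using d L using power_increasing[of 1 d L] Lpos by simp
  have n1: "real n - 1 > 0" using nL L by simp
  have Dnn: "D \<eta> x y \<ge> 0" for \<eta> x y unfolding D_def by simp
  have Qle: "Q x y \<le> 1 / (real n - 1)" for x y unfolding Q_def complete_kernel_def using n1 by simp
  have QD: "Q x y * D \<eta> x y \<le> (1 / (real n - 1)) * D \<eta> x y" for x y \<eta>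
    by (rule mult_right_mono[OF Qle Dnn])
  define R where "R = (\<Sum>\<eta>\<in>\<Omega>. \<Sum>x\<in>V. \<Sum>y\<in>V. if 0 < \<eta> x then D \<eta> x y else 0)"
  define T where "T j = (\<Sum>\<zeta>\<in>\<Omega>. \<Sum>u\<in>V. if 0 < \<zeta> u then D \<zeta> u (tstep L j u) else 0)" for j
  define ST where "ST = (\<Sum>\<eta>\<in>\<Omega>. \<Sum>x\<in>V. \<Sum>y\<in>V. if 0 < \<eta> x then torus_kernel d L x y * D \<eta> x y else 0)"
  define SK where "SK = (\<Sum>\<eta>\<in>\<Omega>. \<Sum>x\<in>V. \<Sum>y\<in>V. if 0 < \<eta> x then Q x y * D \<eta> x y else 0)"
  have step1: "SK \<le> R / (real n - 1)"
  proof -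
    have "SK \<le> (\<Sum>\<eta>\<in>\<Omega>. \<Sum>x\<in>V. \<Sum>y\<in>V. (1 / (real n - 1)) * (if 0 < \<eta> x then D \<eta> x y else 0))"
      unfolding SK_def using QD by (intro sum_mono) auto
    also have "\<dots> = R / (real n - 1)" unfolding R_def by (simp add: sum_divide_distrib)
    finally show ?thesis .
  qed
  have step2: "R \<le> real d * real (L - 1) * (\<Sum>j<d. \<Sum>s<L-1. \<Sum>\<eta>\<in>\<Omega>. \<Sum>x\<in>V. \<Sum>y\<in>V.
                 if 0 < \<eta> x then (tdiff f L \<eta> x y j s)^2 else 0)"
  proof -
    have "R \<le> (\<Sum>\<eta>\<in>\<Omega>. \<Sum>x\<in>V. \<Sum>y\<in>V. real d * real (L - 1) * (\<Sum>j<d. \<Sum>s<L-1.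
                 if 0 < \<eta> x then (tdiff f L \<eta> x y j s)^2 else 0))"
      unfolding R_def D_def
    proof (intro sum_mono)
      fix \<eta> x y assume "\<eta> \<in> \<Omega>" "x \<in> V" "y \<in> V"
      then show "(if 0 < \<eta> x then (f (zrp_move \<eta> x y) - f \<eta>)^2 else 0)
          \<le> real d * real (L - 1) * (\<Sum>j<d. \<Sum>s<L-1. if 0 < \<eta> x then (tdiff f L \<eta> x y j s)^2 else 0)"
        using cs_bound[of x d L y \<eta> f] Lpos unfolding V_def by auto
    qed
    also have "\<dots> = real d * real (L - 1) * (\<Sum>\<eta>\<in>\<Omega>. \<Sum>x\<in>V. \<Sum>y\<in>V. \<Sum>j<d. \<Sum>s<L-1.
                 if 0 < \<eta> x then (tdiff f L \<eta> x y j s)^2 else 0)"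
      by (simp add: sum_distrib_left)
    also have "(\<Sum>\<eta>\<in>\<Omega>. \<Sum>x\<in>V. \<Sum>y\<in>V. \<Sum>j<d. \<Sum>s<L-1.
                 if 0 < \<eta> x then (tdiff f L \<eta> x y j s)^2 else 0)
       = (\<Sum>j<d. \<Sum>s<L-1. \<Sum>\<eta>\<in>\<Omega>. \<Sum>x\<in>V. \<Sum>y\<in>V.
                 if 0 < \<eta> x then (tdiff f L \<eta> x y j s)^2 else 0)"
      unfolding sum3_prod[where C=V] by (rule swap3)
    finally show ?thesis .
  qed
  have step3: "(\<Sum>j<d. \<Sum>s<L-1. \<Sum>\<eta>\<in>\<Omega>. \<Sum>x\<in>V. \<Sum>y\<in>V.
                 if 0 < \<eta> x then (tdiff f L \<eta> x y j s)^2 else 0)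
       \<le> (\<Sum>j<d. \<Sum>s<L-1. real n * T j)"
  proof (intro sum_mono)
    fix j s assume "j \<in> {..<d}"
    then show "(\<Sum>\<eta>\<in>\<Omega>. \<Sum>x\<in>V. \<Sum>y\<in>V. if 0 < \<eta> x then (tdiff f L \<eta> x y j s)^2 else 0) \<le> real n * T j"
      using inj_bound[where j=j and d=d and L=L and f=f and r=r and s=s] Lpos finV cardV unfolding V_def \<Omega>_def T_def D_def by auto
  qed
  have step4: "(\<Sum>j<d. T j) \<le> 2 * real d * ST"
  proof -
    have "(\<Sum>j<d. T j) = (\<Sum>\<zeta>\<in>\<Omega>. \<Sum>u\<in>V. \<Sum>j<d. if 0 < \<zeta> u then D \<zeta> u (tstep L j u) else 0)"
      unfolding T_def
      using swap3[where F="\<lambda>j \<zeta> u. if 0 < \<zeta> u then D \<zeta> u (tstep L j u) else 0" and A="{..<d}" and J=\<Omega> and S=V] by simp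
    also have "\<dots> \<le> (\<Sum>\<zeta>\<in>\<Omega>. \<Sum>u\<in>V. 2 * real d * (\<Sum>v\<in>V. if 0 < \<zeta> u then torus_kernel d L u v * D \<zeta> u v else 0))"
    proof (intro sum_mono)
      fix \<zeta> u assume u: "u \<in> V"
      show "(\<Sum>j<d. if 0 < \<zeta> u then D \<zeta> u (tstep L j u) else 0)
            \<le> 2 * real d * (\<Sum>v\<in>V. if 0 < \<zeta> u then torus_kernel d L u v * D \<zeta> u v else 0)"
        using torus_lb[of u d L "D \<zeta> u"] u L d Dnn unfolding V_def by (cases "0 < \<zeta> u") auto
    qed
    also have "\<dots> = 2 * real d * ST" unfolding ST_def by (simp add: sum_distrib_left)
    finally show ?thesis .
  qed
  have Npos: "real (card \<Omega>) > 0"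
  proof -
    have "card V \<noteq> 0" using cardV nL L by simp
    then have "V \<noteq> {}" by auto
    then obtain v where "v \<in> V" by blast
    then have "(\<lambda>x. if x = v then r else 0) \<in> \<Omega>" unfolding \<Omega>_def using config_point[of v V r] finV by simp
    then show ?thesis using fin by (auto simp: card_gt_0_iff)
  qed
  have STnn: "ST \<ge> 0" unfolding ST_def using Dnn by (intro sum_nonneg) (auto simp: torus_kernel_def)
  have X: "(\<Sum>j<d. \<Sum>s<L-1. real n * T j) \<le> real (L - 1) * real n * (2 * real d * ST)"
  proof -
    have "(\<Sum>j<d. \<Sum>s<L-1. real n * T j) = real (L - 1) * real n * (\<Sum>j<d. T j)"
      by (simp add: sum_distrib_left mult.assoc)
    also have "\<dots> \<le> real (L - 1) * real n * (2 * real d * ST)"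
      using step4 by (intro mult_left_mono) auto
    finally show ?thesis .
  qed
  have c0: "real d * real (L - 1) \<ge> 0" by simp
  have Rb: "R \<le> real d * real (L - 1) * (real (L - 1) * real n * (2 * real d * ST))"
    using step2 mult_left_mono[OF step3 c0] mult_left_mono[OF X c0] by linarith
  have eq: "real d * real (L - 1) * (real (L - 1) * real n * (2 * real d * ST))
      = (2 * real d ^ 2 * ST) * ((real L - 1)^2 * real n)"
    using Lpos by (simp add: of_nat_diff power2_eq_square algebra_simps)
  have K0: "2 * real d ^ 2 * ST \<ge> 0" using STnn by simp
  have rat: "(real L - 1)^2 * real n / (real n - 1) \<le> real L ^ 2"
    by (rule t2[OF t1 n1]) (use nL L in auto)
  have "SK \<le> R / (real n - 1)" by (rule step1)
  also have "\<dots> \<le> ((2 * real d ^ 2 * ST) * ((real L - 1)^2 * real n)) / (real n - 1)"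
    by (rule divide_right_mono[OF Rb[unfolded eq]]) (use n1 in simp)
  also have "\<dots> = (2 * real d ^ 2 * ST) * ((real L - 1)^2 * real n / (real n - 1))"
    by simp
  also have "\<dots> \<le> (2 * real d ^ 2 * ST) * (real L ^ 2)"
    by (rule mult_left_mono[OF rat K0])
  finally have main0: "SK \<le> (2 * real d ^ 2 * ST) * (real L ^ 2)" .
  have "(2 * real d ^ 2 * ST) * (real L ^ 2) = 2 * real d ^ 2 * real L ^ 2 * ST" by (simp add: mult_ac)
  then have main: "SK \<le> 2 * real d ^ 2 * real L ^ 2 * ST" using main0 by linarith
  have "zrp_dirichlet V Q r f = SK / (2 * real (card \<Omega>))"
    unfolding zrp_dirichlet_def SK_def D_def \<Omega>_def ..
  also have "\<dots> \<le> (2 * real d ^ 2 * real L ^ 2 * ST) / (2 * real (card \<Omega>))"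
    using main Npos by (intro divide_right_mono) auto
  also have "\<dots> = 2 * real d ^ 2 * real L ^ 2 * zrp_dirichlet V (torus_kernel d L) r f"
    unfolding zrp_dirichlet_def ST_def D_def \<Omega>_def by (simp only: times_divide_eq_right)
  finally show ?thesis unfolding V_def Q_def n_def .
qed

lemma gap_lower:
  assumes ex: "\<exists>f. zrp_var V r f \<noteq> 0" and c: "c > 0"
    and bd: "\<And>f. zrp_var V r f \<le> c * zrp_dirichlet V P r f"
  shows "1 / c \<le> zrp_gap V P r"
  unfolding zrp_gap_def
proof (rule cInf_greatest)
  show "{zrp_dirichlet V P r f / zrp_var V r f |f. zrp_var V r f \<noteq> 0} \<noteq> {}" using ex by blast
next
  fix x assume "x \<in> {zrp_dirichlet V P r f / zrp_var V r f |f. zrp_var V r f \<noteq> 0}"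
  then obtain f where x: "x = zrp_dirichlet V P r f / zrp_var V r f" and v: "zrp_var V r f \<noteq> 0" by blast
  have vp: "zrp_var V r f > 0" using v zrp_var_nonneg[of V r f] by linarith
  have "zrp_var V r f / c \<le> zrp_dirichlet V P r f" using bd[of f] c by (simp add: divide_le_eq mult.commute)
  then show "1 / c \<le> x" unfolding x using vp c by (simp add: le_divide_eq divide_le_eq mult.commute)
qed

lemma gap_upper:
  assumes P: "\<And>x y. x \<in> V \<Longrightarrow> y \<in> V \<Longrightarrow> P x y \<ge> 0" and v: "zrp_var V r f \<noteq> 0"
  shows "zrp_gap V P r \<le> zrp_dirichlet V P r f / zrp_var V r f"
  unfolding zrp_gap_def
proof (rule cInf_lower)
  show "zrp_dirichlet V P r f / zrp_var V r f \<in> {zrp_dirichlet V P r f / zrp_var V r f |f. zrp_var V r f \<noteq> 0}"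
    using v by blast
  show "bdd_below {zrp_dirichlet V P r f / zrp_var V r f |f. zrp_var V r f \<noteq> 0}"
    unfolding bdd_below_def
    using zrp_dirichlet_nonneg[OF P] zrp_var_nonneg by (intro exI[of _ 0]) (auto intro!: divide_nonneg_nonneg)
qed

theorem mainTheorem2:
  fixes d L r :: nat
  assumes "d \<ge> 1" and "L \<ge> 3" and "r \<ge> 1"
  shows "zrp_relax (torus_vertices d L) (torus_kernel d L) r
           \<le> 2 * real d ^ 2 * real L ^ 2 * zrp_relax {0..<L ^ d} (complete_kernel (L ^ d)) r"
proof -
  define V where "V = torus_vertices d L"
  define n where "n = L ^ d"
  define W where "W = {0..<n}"
  define C where "C = 2 * real d ^ 2 * real L ^ 2"
  have finV: "finite V" and cardV: "card V = n" using torus_fin_card unfolding V_def n_def by auto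
  have nL: "n \<ge> L" unfolding n_def using power_increasing[of 1 d L] assms by simp
  obtain h where h: "bij_betw h V W"
    using finite_same_card_bij[OF finV, of W] cardV unfolding W_def by auto
  have Cpos: "C > 0" unfolding C_def using assms by simp
  define gK where "gK = zrp_gap W (complete_kernel n) r"
  define gT where "gT = zrp_gap V (torus_kernel d L) r"
  have Kpos: "complete_kernel n x y \<ge> 0" for x y unfolding complete_kernel_def using nL assms by auto
  define c where "c = 4^r * (real n - 1) * (2 * real (card (zrp_configs W r)))"
  have cW: "card (zrp_configs W r) > 0"
  proof -
    have "(\<lambda>x. if x = 0 then r else 0) \<in> zrp_configs W r"
      using config_point[of 0 W r] nL assms unfolding W_def by simp
    moreover have "finite (zrp_configs W r)" unfolding W_def by (intro zrp_configs_finite) simp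
    ultimately show ?thesis by (auto simp: card_gt_0_iff)
  qed
  have cpos: "c > 0" unfolding c_def using nL assms cW by simp
  have exW: "\<exists>f. zrp_var W r f \<noteq> 0"
    using zrp_var_ne0[of W 0 1 r] nL assms unfolding W_def by simp
  have gKlow: "1 / c \<le> gK" unfolding gK_def
    by (rule gap_lower[OF exW cpos]) (use complete_var_bound[of n r] nL assms in \<open>simp add: c_def W_def\<close>)
  have gKpos: "gK > 0" using gKlow cpos by (meson less_le_trans zero_less_divide_1_iff)
  have exV: "\<exists>f. zrp_var V r f \<noteq> 0"
  proof -
    have a: "(\<lambda>_. 0) \<in> V" unfolding V_def torus_vertices_def using assms by auto
    have b: "(\<lambda>i. if i = 0 then 1 else 0) \<in> V" unfolding V_def torus_vertices_def using assms by auto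
    have "(\<lambda>_::nat. 0::nat) \<noteq> (\<lambda>i. if i = 0 then 1 else 0)" by (metis zero_neq_one)
    then show ?thesis using zrp_var_ne0[OF finV a b] assms by blast
  qed
  have gTlow: "gK / C \<le> gT" unfolding gT_def zrp_gap_def
  proof (rule cInf_greatest)
    show "{zrp_dirichlet V (torus_kernel d L) r f / zrp_var V r f |f. zrp_var V r f \<noteq> 0} \<noteq> {}"
      using exV by blast
  next
    fix x assume "x \<in> {zrp_dirichlet V (torus_kernel d L) r f / zrp_var V r f |f. zrp_var V r f \<noteq> 0}"
    then obtain f where x: "x = zrp_dirichlet V (torus_kernel d L) r f / zrp_var V r f"
      and v: "zrp_var V r f \<noteq> 0" by blast
    define \<Phi> where "\<Phi> = (\<lambda>\<xi> x. if x \<in> V then \<xi> (h x) else (0::nat))"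
    have tv: "zrp_var W r (f \<circ> \<Phi>) = zrp_var V r f"
      and td: "zrp_dirichlet W (complete_kernel n) r (f \<circ> \<Phi>)
               = zrp_dirichlet V (\<lambda>x y. complete_kernel n (h x) (h y)) r f"
      using zrp_transfer(1)[OF h finV, where r=r and f=f] zrp_transfer(2)[OF h finV, where r=r and f=f and P="complete_kernel n"] unfolding \<Phi>_def by auto
    have vp: "zrp_var V r f > 0" using v zrp_var_nonneg[of V r f] by linarith
    have "gK \<le> zrp_dirichlet W (complete_kernel n) r (f \<circ> \<Phi>) / zrp_var W r (f \<circ> \<Phi>)"
      unfolding gK_def by (rule gap_upper) (use Kpos tv v in auto)
    also have "\<dots> = zrp_dirichlet V (\<lambda>x y. complete_kernel n (h x) (h y)) r f / zrp_var V r f"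
      using tv td by simp
    also have "\<dots> \<le> C * zrp_dirichlet V (torus_kernel d L) r f / zrp_var V r f"
      using torus_comparison[of d L h r f] h assms vp unfolding V_def W_def n_def C_def
      by (intro divide_right_mono) auto
    finally have "gK \<le> C * x" unfolding x by simp
    then show "gK / C \<le> x" using Cpos by (simp add: divide_le_eq mult.commute)
  qed
  have q: "gK / C > 0" using gKpos Cpos by simp
  have "zrp_relax V (torus_kernel d L) r = 1 / gT" unfolding zrp_relax_def gT_def ..
  also have "\<dots> \<le> 1 / (gK / C)"
  proof (rule divide_left_mono[OF gTlow])
    have "gT > 0" using gTlow q by linarith
    then show "0 < gT * (gK / C)" using q by (rule mult_pos_pos)
  qed simp
  also have "\<dots> = C * (1 / gK)" by simp
  also have "\<dots> = C * zrp_relax W (complete_kernel n) r" unfolding zrp_relax_def gK_def ..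
  finally show ?thesis unfolding V_def C_def W_def n_def .
qed

end
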